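(* Let $\Delta$ be a finite set with $|\Delta|\ge2$, $\ell\ge2$, $\Omega=\Delta^\ell$, $W=\mathrm{Sym}\,\Delta\wr S_\ell$ in product action on $\Omega$, $G\le W$, and let $M=T_1\times\cdots\times T_k$ be a minimal normal subgroup of $G$ transitive on $\Omega$, with the $T_i$ isomorphic non-abelian finite simple groups. Let $T$ be a simple factor of $M$ (one of the $T_i$), and let $j_1,\dots,j_s$ be distinct indices in $\{1,\dots,\ell\}$ such that $T\le M^{(j_r)}$ for each $r$. Let $\delta\in\Delta$, put $\omega=(\delta,\dots,\delta)\in\Omega$, and for $r\in\{1,\dots,s\}$ let $A_r=(M^{(j_r)})_\delta\overline T/\overline T\le T$. Then $$A_r\Big(\bigcap_{i\ne r}A_i\Big)=T\ \text{ for all } r,\qquad\text{and}\qquad M_\omega\overline T/\overline T\le\bigcap_{r=1}^{s}A_r.$$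
   Context: Product action: $(\delta_1,\dots,\delta_\ell)^{(g_1,\dots,g_\ell)h}=(\delta_{1h^{-1}}g_{1h^{-1}},\dots,\delta_{\ell h^{-1}}g_{\ell h^{-1}})$ for $g_i\in\mathrm{Sym}\,\Delta$, $h\in S_\ell$. Let $\pi:W\to S_\ell$ be the natural projection; for $j\in\{1,\dots,\ell\}$ let $W_j$ be the stabiliser of $j$ under $\pi$, so $W_j=\mathrm{Sym}\,\Delta\times(\mathrm{Sym}\,\Delta\wr S_{\ell-1})$ with the first factor acting on the $j$-th coordinate. For $H\le W$ the $j$-th component $H^{(j)}$ is the projection of $H\cap W_j$ to the first factor. One has $M\le(\mathrm{Sym}\,\Delta)^\ell$, and $M^{(j)}$ is a quotient of $M$ which is identified with the direct product of those $T_i$ not contained in the kernel of $M\to M^{(j)}$; "$T\le M^{(j)}$" refers to this identification, and $(M^{(j)})_\delta$ (stabiliser of $\delta$ in $M^{(j)}$ acting on $\Delta$) is viewed as a subgroup of $M$. $\overline T=C_M(T)$, so $M=T\times\overline T$, and for $H\le M$ the quotient $H\overline T/\overline T$ is identified with the projection of $H$ into $T$. $M_\omega$ is the stabiliser of $\omega$ in $M$. An empty intersection of subgroups of $T$ is $T$. *)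

theory Defs
  imports "HOL-Algebra.Algebra" "HOL-Combinatorics.Permutations"
begin

definition prod_space :: "nat \<Rightarrow> 'd set \<Rightarrow> (nat \<Rightarrow> 'd) set" where
  "prod_space l D = PiE {1..l} (\<lambda>_. D)"

definition wr_data :: "nat \<Rightarrow> 'd set \<Rightarrow> ((nat \<Rightarrow> 'd \<Rightarrow> 'd) \<times> (nat \<Rightarrow> nat)) set" where
  "wr_data l D = {(g, h). (\<forall>i\<in>{1..l}. bij_betw (g i) D D) \<and> h permutes {1..l}}"

text \<open>(d_1,...,d_l)^((g_1,...,g_l)h) = (d_{1h^-1} g_{1h^-1}, ..., d_{lh^-1} g_{lh^-1}).\<close>
definition wr_perm :: "nat \<Rightarrow> 'd set \<Rightarrow> (nat \<Rightarrow> 'd \<Rightarrow> 'd) \<Rightarrow> (nat \<Rightarrow> nat)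
    \<Rightarrow> (nat \<Rightarrow> 'd) \<Rightarrow> (nat \<Rightarrow> 'd)" where
  "wr_perm l D g h = (\<lambda>x\<in>prod_space l D. \<lambda>i\<in>{1..l}. g (inv_into UNIV h i) (x (inv_into UNIV h i)))"

definition wreath :: "nat \<Rightarrow> 'd set \<Rightarrow> ((nat \<Rightarrow> 'd) \<Rightarrow> (nat \<Rightarrow> 'd)) set" where
  "wreath l D = {wr_perm l D g h | g h. (g, h) \<in> wr_data l D}"

text \<open>The natural projection pi : W -> S_l (well defined since |D| >= 2).\<close>
definition wr_proj :: "nat \<Rightarrow> 'd set \<Rightarrow> ((nat \<Rightarrow> 'd) \<Rightarrow> (nat \<Rightarrow> 'd)) \<Rightarrow> (nat \<Rightarrow> nat)" where
  "wr_proj l D w = (THE h. \<exists>g. (g, h) \<in> wr_data l D \<and> w = wr_perm l D g h)"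

definition wr_base :: "nat \<Rightarrow> 'd set \<Rightarrow> ((nat \<Rightarrow> 'd) \<Rightarrow> (nat \<Rightarrow> 'd)) set" where
  "wr_base l D = {w \<in> wreath l D. wr_proj l D w = id}"

definition wr_stab :: "nat \<Rightarrow> 'd set \<Rightarrow> nat \<Rightarrow> ((nat \<Rightarrow> 'd) \<Rightarrow> (nat \<Rightarrow> 'd)) set" where
  "wr_stab l D j = {w \<in> wreath l D. wr_proj l D w j = j}"

text \<open>For w in W_j, the permutation of D acting on the j-th coordinate (first factor of W_j).\<close>
definition wr_coord :: "nat \<Rightarrow> 'd set \<Rightarrow> nat \<Rightarrow> ((nat \<Rightarrow> 'd) \<Rightarrow> (nat \<Rightarrow> 'd)) \<Rightarrow> ('d \<Rightarrow> 'd)" where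
  "wr_coord l D j w = (\<lambda>d\<in>D. w (\<lambda>i\<in>{1..l}. d) j)"

definition component :: "nat \<Rightarrow> 'd set \<Rightarrow> ((nat \<Rightarrow> 'd) \<Rightarrow> (nat \<Rightarrow> 'd)) set \<Rightarrow> nat \<Rightarrow> ('d \<Rightarrow> 'd) set" where
  "component l D H j = wr_coord l D j ` (H \<inter> wr_stab l D j)"

definition component_kernel :: "nat \<Rightarrow> 'd set \<Rightarrow> ((nat \<Rightarrow> 'd) \<Rightarrow> (nat \<Rightarrow> 'd)) set \<Rightarrow> nat
    \<Rightarrow> ((nat \<Rightarrow> 'd) \<Rightarrow> (nat \<Rightarrow> 'd)) set" where
  "component_kernel l D H j = {w \<in> H \<inter> wr_stab l D j. wr_coord l D j w = (\<lambda>d\<in>D. d)}"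

text \<open>Preimage in H of the point stabiliser (H^(j))_delta.\<close>
definition component_stab_preimage :: "nat \<Rightarrow> 'd set \<Rightarrow> ((nat \<Rightarrow> 'd) \<Rightarrow> (nat \<Rightarrow> 'd)) set \<Rightarrow> nat \<Rightarrow> 'd
    \<Rightarrow> ((nat \<Rightarrow> 'd) \<Rightarrow> (nat \<Rightarrow> 'd)) set" where
  "component_stab_preimage l D H j \<delta> = {w \<in> H \<inter> wr_stab l D j. wr_coord l D j w \<delta> = \<delta>}"

definition internal_dirprod :: "('a, 'b) monoid_scheme \<Rightarrow> 'a set \<Rightarrow> nat \<Rightarrow> (nat \<Rightarrow> 'a set) \<Rightarrow> bool" where
  "internal_dirprod Gr M k Tf \<longleftrightarrow>
     (\<forall>i<k. Tf i \<lhd> Gr\<lparr>carrier := M\<rparr>) \<and>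
     generate Gr (\<Union>i<k. Tf i) = M \<and>
     (\<forall>i<k. Tf i \<inter> generate Gr (\<Union>j\<in>{..<k} - {i}. Tf j) = {\<one>\<^bsub>Gr\<^esub>})"

definition minimal_normal :: "('a, 'b) monoid_scheme \<Rightarrow> 'a set \<Rightarrow> bool" where
  "minimal_normal Gr M \<longleftrightarrow> M \<lhd> Gr \<and> M \<noteq> {\<one>\<^bsub>Gr\<^esub>} \<and>
     (\<forall>N. N \<lhd> Gr \<and> N \<subseteq> M \<longrightarrow> N = {\<one>\<^bsub>Gr\<^esub>} \<or> N = M)"

definition centralizer_in :: "('a, 'b) monoid_scheme \<Rightarrow> 'a set \<Rightarrow> 'a set \<Rightarrow> 'a set" where
  "centralizer_in Gr M T = {m \<in> M. \<forall>t\<in>T. m \<otimes>\<^bsub>Gr\<^esub> t = t \<otimes>\<^bsub>Gr\<^esub> m}"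

text \<open>For M = T x Tbar, the projection of H <= M into T, i.e. H Tbar / Tbar identified with a subgroup of T.\<close>
definition proj_factor :: "('a, 'b) monoid_scheme \<Rightarrow> 'a set \<Rightarrow> 'a set \<Rightarrow> 'a set \<Rightarrow> 'a set" where
  "proj_factor Gr T Tbar H = {t \<in> T. \<exists>h\<in>H. \<exists>u\<in>Tbar. h = t \<otimes>\<^bsub>Gr\<^esub> u}"

end

theory Submission
  imports Defs
begin

lemma (in group) normal_comm:
  assumes M: "subgroup M G" and A: "A \<lhd> G\<lparr>carrier:=M\<rparr>" and B: "B \<lhd> G\<lparr>carrier:=M\<rparr>"
    and AB: "A \<inter> B \<subseteq> {\<one>}" and x: "x \<in> A" and y: "y \<in> B"
  shows "x \<otimes> y = y \<otimes> x"
proof -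
  have sA0: "subgroup A (G\<lparr>carrier:=M\<rparr>)" using A normal_imp_subgroup by blast
  have sB0: "subgroup B (G\<lparr>carrier:=M\<rparr>)" using B normal_imp_subgroup by blast
  have AM: "A \<subseteq> M" using subgroup.subset[OF sA0] by simp
  have BM: "B \<subseteq> M" using subgroup.subset[OF sB0] by simp
  have MG: "M \<subseteq> carrier G" using M subgroup.subset by blast
  have xG: "x \<in> carrier G" and yG: "y \<in> carrier G" using x y AM BM MG by auto
  have xM: "x \<in> M" and yM: "y \<in> M" using x y AM BM by auto
  have sA: "subgroup A G" using sA0 M incl_subgroup by blast
  have sB: "subgroup B G" using sB0 M incl_subgroup by blast
  have c1: "y \<otimes> inv x \<otimes> inv y \<in> A"
  proof -
    have "inv x \<in> A" by (rule subgroup.m_inv_closed[OF sA x])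
    then have "y \<otimes>\<^bsub>G\<lparr>carrier:=M\<rparr>\<^esub> inv x \<otimes>\<^bsub>G\<lparr>carrier:=M\<rparr>\<^esub> inv\<^bsub>G\<lparr>carrier:=M\<rparr>\<^esub> y \<in> A"
      using normal.inv_op_closed2[OF A, of y "inv x"] yM by simp
    then show ?thesis using m_inv_consistent[OF M yM] by simp
  qed
  have c2: "x \<otimes> y \<otimes> inv x \<in> B"
  proof -
    have "x \<otimes>\<^bsub>G\<lparr>carrier:=M\<rparr>\<^esub> y \<otimes>\<^bsub>G\<lparr>carrier:=M\<rparr>\<^esub> inv\<^bsub>G\<lparr>carrier:=M\<rparr>\<^esub> x \<in> B"
      using normal.inv_op_closed2[OF B, of x y] xM y by simp
    then show ?thesis using m_inv_consistent[OF M xM] by simp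
  qed
  have e1: "x \<otimes> (y \<otimes> inv x \<otimes> inv y) \<in> A" by (rule subgroup.m_closed[OF sA x c1])
  have e2: "x \<otimes> y \<otimes> inv x \<otimes> inv y \<in> B" by (rule subgroup.m_closed[OF sB c2 subgroup.m_inv_closed[OF sB y]])
  have e3: "x \<otimes> (y \<otimes> inv x \<otimes> inv y) = x \<otimes> y \<otimes> inv x \<otimes> inv y"
    using xG yG by (simp add: m_assoc)
  have e4: "x \<otimes> y \<otimes> inv x \<otimes> inv y = \<one>"
  proof -
    have "x \<otimes> y \<otimes> inv x \<otimes> inv y \<in> A \<inter> B" using e1 e2 unfolding e3 by (rule IntI)
    then show ?thesis using AB by auto
  qed
  have "x \<otimes> y = x \<otimes> y \<otimes> inv x \<otimes> inv y \<otimes> y \<otimes> x" using xG yG by (simp add: m_assoc)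
  also have "\<dots> = y \<otimes> x" using e4 xG yG by simp
  finally show ?thesis .
qed

lemma (in group) dp_piece:
  assumes M: "subgroup M G" and DP: "internal_dirprod G M k Tf" and i: "i < k"
  shows "subgroup (Tf i) G" "Tf i \<subseteq> M" "Tf i \<lhd> G\<lparr>carrier:=M\<rparr>"
proof -
  show n: "Tf i \<lhd> G\<lparr>carrier:=M\<rparr>" using DP i unfolding internal_dirprod_def by blast
  have s0: "subgroup (Tf i) (G\<lparr>carrier:=M\<rparr>)" using n normal_imp_subgroup by blast
  show "Tf i \<subseteq> M" using subgroup.subset[OF s0] by simp
  show "subgroup (Tf i) G" using s0 M incl_subgroup by blast
qed

lemma (in group) dp_comm:
  assumes M: "subgroup M G" and DP: "internal_dirprod G M k Tf" and a: "a < k" and b: "b < k"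
    and ab: "a \<noteq> b" and x: "x \<in> Tf a" and y: "y \<in> Tf b"
  shows "x \<otimes> y = y \<otimes> x"
proof -
  have MG: "M \<subseteq> carrier G" using M subgroup.subset by blast
  have U: "(\<Union>j\<in>{..<k} - {a}. Tf j) \<subseteq> carrier G"
    using dp_piece(2)[OF M DP] MG by blast
  have "Tf b \<subseteq> generate G (\<Union>j\<in>{..<k} - {a}. Tf j)"
    using ab b generate.incl[of _ "\<Union>j\<in>{..<k} - {a}. Tf j" G] by blast
  moreover have "Tf a \<inter> generate G (\<Union>j\<in>{..<k} - {a}. Tf j) = {\<one>}"
    using DP a unfolding internal_dirprod_def by blast
  ultimately have "Tf a \<inter> Tf b \<subseteq> {\<one>}" by blast
  then show ?thesis using normal_comm[OF M dp_piece(3)[OF M DP a] dp_piece(3)[OF M DP b] _ x y] by blast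
qed

lemma (in group) dp_decomp:
  assumes M: "subgroup M G" and DP: "internal_dirprod G M k Tf" and i0: "i0 < k"
    and N_def: "N = generate G (\<Union>j\<in>{..<k} - {i0}. Tf j)"
  shows "subgroup N G" "N \<subseteq> M" "Tf i0 \<inter> N = {\<one>}"
    "\<forall>u\<in>N. \<forall>t\<in>Tf i0. u \<otimes> t = t \<otimes> u"
    "\<forall>m\<in>M. \<exists>t\<in>Tf i0. \<exists>u\<in>N. m = t \<otimes> u"
proof -
  have MG: "M \<subseteq> carrier G" using M subgroup.subset by blast
  have UM: "(\<Union>j\<in>{..<k} - {i0}. Tf j) \<subseteq> M"
    using dp_piece(2)[OF M DP] by blast
  show sN: "subgroup N G" unfolding N_def using generate_is_subgroup UM MG by blast
  show "N \<subseteq> M" unfolding N_def using generate_subgroup_incl[OF UM M] .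
  show "Tf i0 \<inter> N = {\<one>}"
    using DP i0 unfolding internal_dirprod_def N_def by blast
  have sT: "subgroup (Tf i0) G" using dp_piece(1)[OF M DP i0] .
  have TG: "Tf i0 \<subseteq> carrier G" using subgroup.subset[OF sT] .
  have NG: "N \<subseteq> carrier G" using subgroup.subset[OF sN] .
  have comm: "\<forall>t\<in>Tf i0. u \<otimes> t = t \<otimes> u" if "u \<in> N" for u
    using that unfolding N_def
  proof (induction rule: generate.induct)
    case one
    then show ?case using TG by auto
  next
    case (incl h)
    then obtain j where j: "j < k" "j \<noteq> i0" "h \<in> Tf j" by blast
    then show ?case using dp_comm[OF M DP j(1) i0 j(2) j(3)] by blast
  next
    case (inv h)
    then obtain j where j: "j < k" "j \<noteq> i0" "h \<in> Tf j" by blast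
    have "inv h \<in> Tf j" using subgroup.m_inv_closed[OF dp_piece(1)[OF M DP j(1)] j(3)] .
    then show ?case using dp_comm[OF M DP j(1) i0 j(2)] by blast
  next
    case (eng h1 h2)
    have h1G: "h1 \<in> carrier G" using eng.hyps(1) NG unfolding N_def by blast
    have h2G: "h2 \<in> carrier G" using eng.hyps(2) NG unfolding N_def by blast
    show ?case
    proof
      fix t assume t: "t \<in> Tf i0"
      have tG: "t \<in> carrier G" using t TG by blast
      have "h1 \<otimes> h2 \<otimes> t = h1 \<otimes> (h2 \<otimes> t)" using h1G h2G tG by (simp add: m_assoc)
      also have "\<dots> = h1 \<otimes> (t \<otimes> h2)" using eng.IH(2) t by simp
      also have "\<dots> = h1 \<otimes> t \<otimes> h2" using h1G h2G tG by (simp add: m_assoc)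
      also have "\<dots> = t \<otimes> h1 \<otimes> h2" using eng.IH(1) t by simp
      also have "\<dots> = t \<otimes> (h1 \<otimes> h2)" using h1G h2G tG by (simp add: m_assoc)
      finally show "h1 \<otimes> h2 \<otimes> t = t \<otimes> (h1 \<otimes> h2)" .
    qed
  qed
  then show "\<forall>u\<in>N. \<forall>t\<in>Tf i0. u \<otimes> t = t \<otimes> u" by blast
  have oneN: "\<one> \<in> N" unfolding N_def by (rule generate.one)
  have oneT: "\<one> \<in> Tf i0" using subgroup.one_closed[OF sT] .
  have gen: "\<exists>t\<in>Tf i0. \<exists>u\<in>N. h = t \<otimes> u" if "h \<in> Tf i" "i < k" for h i
  proof (cases "i = i0")
    case True
    then show ?thesis using that oneN TG by (intro bexI[of _ h] bexI[of _ \<one>]) auto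
  next
    case False
    have "h \<in> N" unfolding N_def using that False by (intro generate.incl) blast
    then show ?thesis using oneT NG by (intro bexI[of _ \<one>] bexI[of _ h]) auto
  qed
  have "m \<in> generate G (\<Union>i<k. Tf i) \<Longrightarrow> \<exists>t\<in>Tf i0. \<exists>u\<in>N. m = t \<otimes> u" for m
  proof (induction rule: generate.induct)
    case one
    then show ?case using oneN oneT by (intro bexI[of _ \<one>] bexI[of _ \<one>]) auto
  next
    case (incl h)
    then show ?case using gen by blast
  next
    case (inv h)
    then obtain i where i: "i < k" "h \<in> Tf i" by blast
    have "inv h \<in> Tf i" using subgroup.m_inv_closed[OF dp_piece(1)[OF M DP i(1)] i(2)] .
    then show ?case using gen i(1) by blast
  next
    case (eng h1 h2)
    from eng.IH(1) obtain t1 u1 where a: "t1 \<in> Tf i0" "u1 \<in> N" "h1 = t1 \<otimes> u1" by blast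
    from eng.IH(2) obtain t2 u2 where b: "t2 \<in> Tf i0" "u2 \<in> N" "h2 = t2 \<otimes> u2" by blast
    have G: "t1 \<in> carrier G" "t2 \<in> carrier G" "u1 \<in> carrier G" "u2 \<in> carrier G"
      using a b TG NG by auto
    have "h1 \<otimes> h2 = t1 \<otimes> (u1 \<otimes> t2) \<otimes> u2" using a b G by (simp add: m_assoc)
    also have "\<dots> = t1 \<otimes> (t2 \<otimes> u1) \<otimes> u2" using comm[OF a(2)] b(1) by simp
    also have "\<dots> = (t1 \<otimes> t2) \<otimes> (u1 \<otimes> u2)" using G by (simp add: m_assoc)
    finally show ?case
      using subgroup.m_closed[OF sT a(1) b(1)] subgroup.m_closed[OF sN a(2) b(2)] by blast
  qed
  moreover have "generate G (\<Union>i<k. Tf i) = M" using DP unfolding internal_dirprod_def by blast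
  ultimately show "\<forall>m\<in>M. \<exists>t\<in>Tf i0. \<exists>u\<in>N. m = t \<otimes> u" by blast
qed

lemma two_elems:
  assumes "card D \<ge> 2"
  obtains d1 d2 where "d1 \<in> D" "d2 \<in> D" "d1 \<noteq> d2"
proof -
  have fin: "finite D" using assms card.infinite by force
  have "D \<noteq> {}" using assms by auto
  then obtain d1 where d1: "d1 \<in> D" by blast
  have "card (D - {d1}) \<ge> 1" using assms d1 fin by (simp add: card_Diff_singleton)
  then have "D - {d1} \<noteq> {}" by (metis card.empty not_one_le_zero)
  then obtain d2 where "d2 \<in> D - {d1}" by blast
  then show ?thesis using that d1 by blast
qed

lemma wr_perm_unique:
  assumes D2: "card D \<ge> 2" and gh: "(g,h) \<in> wr_data l D" and gh': "(g',h') \<in> wr_data l D"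
    and eq: "wr_perm l D g h = wr_perm l D g' h'"
  shows "h = h'"
proof -
  obtain d1 d2 where d: "d1 \<in> D" "d2 \<in> D" "d1 \<noteq> d2" using two_elems[OF D2] by blast
  have ph: "h permutes {1..l}" and ph': "h' permutes {1..l}"
    and bg: "\<forall>i\<in>{1..l}. bij_betw (g i) D D" and bg': "\<forall>i\<in>{1..l}. bij_betw (g' i) D D"
    using gh gh' unfolding wr_data_def by auto
  have pi: "inv_into UNIV h permutes {1..l}" using permutes_inv[OF ph] .
  have pi': "inv_into UNIV h' permutes {1..l}" using permutes_inv[OF ph'] .
  have "inv_into UNIV h i = inv_into UNIV h' i" for i
  proof (cases "i \<in> {1..l}")
    case False
    then show ?thesis using permutes_not_in[OF pi] permutes_not_in[OF pi'] by simp
  next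
    case True
    define a where "a = inv_into UNIV h i"
    define b where "b = inv_into UNIV h' i"
    have a: "a \<in> {1..l}" unfolding a_def using permutes_in_image[OF pi] True by blast
    have b: "b \<in> {1..l}" unfolding b_def using permutes_in_image[OF pi'] True by blast
    show ?thesis
    proof (rule ccontr)
      assume "inv_into UNIV h i \<noteq> inv_into UNIV h' i"
      then have ab: "a \<noteq> b" unfolding a_def b_def .
      define x where "x = (\<lambda>k\<in>{1..l}. d1)"
      define y where "y = (\<lambda>k\<in>{1..l}. if k = a then d2 else d1)"
      have xS: "x \<in> prod_space l D" unfolding x_def prod_space_def using d by auto
      have yS: "y \<in> prod_space l D" unfolding y_def prod_space_def using d by auto
      have "wr_perm l D g h x i = g a d1"
        using xS True a unfolding wr_perm_def a_def x_def by simp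
      moreover have "wr_perm l D g h y i = g a d2"
        using yS True a unfolding wr_perm_def a_def y_def by simp
      moreover have "wr_perm l D g' h' x i = g' b d1"
        using xS True b unfolding wr_perm_def b_def x_def by simp
      moreover have "wr_perm l D g' h' y i = g' b d1"
        using yS True b ab unfolding wr_perm_def b_def y_def by simp
      ultimately have "g a d1 = g a d2" using eq by simp
      moreover have "inj_on (g a) D" using bg a bij_betw_imp_inj_on by blast
      ultimately show False using d inj_on_contraD by metis
    qed
  qed
  then have "inv_into UNIV h = inv_into UNIV h'" by blast
  then show ?thesis using permutes_inv_inv[OF ph] permutes_inv_inv[OF ph'] by metis
qed

lemma base_coord:
  assumes D2: "card D \<ge> 2" and w: "w \<in> wr_base l D"
  shows "\<exists>g. (\<forall>i\<in>{1..l}. bij_betw (g i) D D) \<and>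
           (\<forall>x\<in>prod_space l D. \<forall>i\<in>{1..l}. w x i = g i (x i))"
proof -
  obtain g h where gh: "(g,h) \<in> wr_data l D" and wgh: "w = wr_perm l D g h"
    using w unfolding wr_base_def wreath_def by blast
  have "wr_proj l D w = h"
    unfolding wr_proj_def
  proof (rule the_equality)
    show "\<exists>g. (g, h) \<in> wr_data l D \<and> w = wr_perm l D g h" using gh wgh by blast
  next
    fix h' assume "\<exists>g'. (g', h') \<in> wr_data l D \<and> w = wr_perm l D g' h'"
    then obtain g' where "(g', h') \<in> wr_data l D" "w = wr_perm l D g' h'" by blast
    then show "h' = h" using wr_perm_unique[OF D2 _ gh] wgh by metis
  qed
  then have hid: "h = id" using w unfolding wr_base_def by simp
  have "\<forall>i\<in>{1..l}. bij_betw (g i) D D" using gh unfolding wr_data_def by auto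
  moreover have "\<forall>x\<in>prod_space l D. \<forall>i\<in>{1..l}. w x i = g i (x i)"
    unfolding wgh hid wr_perm_def by (simp add: inv_id)
  ultimately show ?thesis by blast
qed

lemma base_agree:
  assumes D2: "card D \<ge> 2" and w: "w \<in> wr_base l D"
    and x: "x \<in> prod_space l D" and y: "y \<in> prod_space l D" and j: "j \<in> {1..l}" and xy: "x j = y j"
  shows "w x j = w y j"
  using base_coord[OF D2 w] x y j xy by metis

lemma base_stab:
  assumes "w \<in> wr_base l D" shows "w \<in> wr_stab l D j"
  using assms unfolding wr_base_def wr_stab_def by simp

theorem lemma2p4:
  fixes D :: "'d set" and l :: nat
    and G M :: "((nat \<Rightarrow> 'd) \<Rightarrow> (nat \<Rightarrow> 'd)) set"
    and k :: nat and Tf :: "nat \<Rightarrow> ((nat \<Rightarrow> 'd) \<Rightarrow> (nat \<Rightarrow> 'd)) set"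
    and T :: "((nat \<Rightarrow> 'd) \<Rightarrow> (nat \<Rightarrow> 'd)) set"
    and s :: nat and j :: "nat \<Rightarrow> nat" and \<delta> :: 'd
  defines "\<Omega> \<equiv> prod_space l D"
  defines "Sym\<Omega> \<equiv> BijGroup (prod_space l D)"
  defines "Tbar \<equiv> centralizer_in (BijGroup (prod_space l D)) M T"
  defines "\<omega> \<equiv> (\<lambda>i\<in>{1..l}. \<delta>)"
  defines "A \<equiv> (\<lambda>r. proj_factor (BijGroup (prod_space l D)) T Tbar
                     (component_stab_preimage l D M (j r) \<delta>))"
  assumes "finite D" and "card D \<ge> 2" and "l \<ge> 2"
    and G_sub: "subgroup G Sym\<Omega>" and G_W: "G \<subseteq> wreath l D"
    and M_min: "minimal_normal (Sym\<Omega>\<lparr>carrier := G\<rparr>) M"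
    and M_trans: "\<forall>x\<in>\<Omega>. \<forall>y\<in>\<Omega>. \<exists>m\<in>M. m x = y"
    and M_base: "M \<subseteq> wr_base l D"
    and M_prod: "internal_dirprod Sym\<Omega> M k Tf"
    and T_simple: "\<forall>i<k. simple_group (Sym\<Omega>\<lparr>carrier := Tf i\<rparr>)"
    and T_nonab: "\<forall>i<k. \<not> comm_group (Sym\<Omega>\<lparr>carrier := Tf i\<rparr>)"
    and T_iso: "\<forall>i<k. \<forall>i'<k. Sym\<Omega>\<lparr>carrier := Tf i\<rparr> \<cong> Sym\<Omega>\<lparr>carrier := Tf i'\<rparr>"
    and T_factor: "T \<in> Tf ` {..<k}"
    and j_inj: "inj_on j {1..s}" and j_range: "j ` {1..s} \<subseteq> {1..l}"
    and T_comp: "\<forall>r\<in>{1..s}. \<not> T \<subseteq> component_kernel l D M (j r)"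
    and "\<delta> \<in> D"
  shows "(\<forall>r\<in>{1..s}. A r <#>\<^bsub>Sym\<Omega>\<^esub> (T \<inter> (\<Inter>i\<in>{1..s} - {r}. A i)) = T)
       \<and> proj_factor Sym\<Omega> T Tbar {m \<in> M. m \<omega> = \<omega>} \<subseteq> T \<inter> (\<Inter>r\<in>{1..s}. A r)"
proof -
  interpret S: group Sym\<Omega> unfolding Sym\<Omega>_def by (rule group_BijGroup)
  have D2: "card D \<ge> 2" by fact
  have carrS: "carrier Sym\<Omega> = Bij \<Omega>" unfolding Sym\<Omega>_def \<Omega>_def BijGroup_def by simp
  have multS: "\<And>a b. a \<in> Bij \<Omega> \<Longrightarrow> b \<in> Bij \<Omega> \<Longrightarrow> a \<otimes>\<^bsub>Sym\<Omega>\<^esub> b = compose \<Omega> a b"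
    unfolding Sym\<Omega>_def \<Omega>_def BijGroup_def by simp
  have sM0: "subgroup M (Sym\<Omega>\<lparr>carrier := G\<rparr>)"
    using M_min unfolding minimal_normal_def using normal_imp_subgroup by blast
  have sM: "subgroup M Sym\<Omega>" using S.incl_subgroup[OF G_sub sM0] .
  have MS: "M \<subseteq> Bij \<Omega>" using subgroup.subset[OF sM] carrS by simp
  obtain i0 where i0: "i0 < k" and Ti0: "T = Tf i0" using T_factor by blast
  define N where "N = generate Sym\<Omega> (\<Union>j\<in>{..<k} - {i0}. Tf j)"
  note dd = S.dp_decomp[OF sM M_prod i0 N_def]
  have sN: "subgroup N Sym\<Omega>" using dd(1) .
  have NM: "N \<subseteq> M" using dd(2) .
  have TN: "T \<inter> N = {\<one>\<^bsub>Sym\<Omega>\<^esub>}" using dd(3) Ti0 by simp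
  have comm: "\<forall>u\<in>N. \<forall>t\<in>T. u \<otimes>\<^bsub>Sym\<Omega>\<^esub> t = t \<otimes>\<^bsub>Sym\<Omega>\<^esub> u" using dd(4) Ti0 by simp
  have dec: "\<forall>m\<in>M. \<exists>t\<in>T. \<exists>u\<in>N. m = t \<otimes>\<^bsub>Sym\<Omega>\<^esub> u" using dd(5) Ti0 by simp
  have sT: "subgroup T Sym\<Omega>" using S.dp_piece(1)[OF sM M_prod i0] Ti0 by simp
  have TM: "T \<subseteq> M" using S.dp_piece(2)[OF sM M_prod i0] Ti0 by simp
  have TS: "T \<subseteq> carrier Sym\<Omega>" using subgroup.subset[OF sT] .
  have NS: "N \<subseteq> carrier Sym\<Omega>" using subgroup.subset[OF sN] .
  have NTbar: "N \<subseteq> Tbar"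
    unfolding Tbar_def centralizer_in_def using NM comm unfolding Sym\<Omega>_def by blast
  have \<omega>\<Omega>: "\<omega> \<in> \<Omega>" unfolding \<omega>_def \<Omega>_def prod_space_def using \<open>\<delta> \<in> D\<close> by auto
  have Mbase: "\<And>m. m \<in> M \<Longrightarrow> m \<in> wr_base l D" using M_base by blast
  have Mr: "m \<in> component_stab_preimage l D M (j r) \<delta> \<longleftrightarrow> m \<omega> (j r) = \<delta>" if m: "m \<in> M" for m r
    unfolding component_stab_preimage_def wr_coord_def \<omega>_def
    using m base_stab[OF Mbase[OF m]] \<open>\<delta> \<in> D\<close> by simp
  have key: "\<exists>a\<in>M. \<exists>b\<in>M. m = a \<otimes>\<^bsub>Sym\<Omega>\<^esub> b \<and> a \<omega> (j r) = \<delta> \<and> (\<forall>i\<in>{1..s} - {r}. b \<omega> (j i) = \<delta>)"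
    if m: "m \<in> M" and r: "r \<in> {1..s}" for m r
  proof -
    have jr: "j r \<in> {1..l}" using j_range r by blast
    have mB: "m \<in> Bij \<Omega>" using m MS by blast
    then have "bij_betw m \<Omega> \<Omega>" unfolding Bij_def by simp
    then obtain q where q: "q \<in> \<Omega>" "m q = \<omega>" using \<omega>\<Omega> by (metis bij_betw_iff_bijections)
    define p where "p = (\<lambda>i\<in>{1..l}. if i = j r then q (j r) else \<delta>)"
    have qD: "q (j r) \<in> D" using q(1) jr unfolding \<Omega>_def prod_space_def by auto
    have p\<Omega>: "p \<in> \<Omega>" unfolding p_def \<Omega>_def prod_space_def using qD \<open>\<delta> \<in> D\<close> by auto
    obtain b where b: "b \<in> M" "b p = \<omega>" using M_trans p\<Omega> \<omega>\<Omega> by blast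
    define a where "a = m \<otimes>\<^bsub>Sym\<Omega>\<^esub> inv\<^bsub>Sym\<Omega>\<^esub> b"
    have aM: "a \<in> M" unfolding a_def
      using subgroup.m_closed[OF sM m subgroup.m_inv_closed[OF sM b(1)]] .
    have mS: "m \<in> carrier Sym\<Omega>" and bS: "b \<in> carrier Sym\<Omega>" using m b(1) MS carrS by auto
    have mab: "m = a \<otimes>\<^bsub>Sym\<Omega>\<^esub> b" unfolding a_def using mS bS by (simp add: S.m_assoc)
    have "a \<omega> = m p"
    proof -
      have "a \<otimes>\<^bsub>Sym\<Omega>\<^esub> b = compose \<Omega> a b" using multS aM b(1) MS by blast
      then have "m p = compose \<Omega> a b p" using mab by simp
      also have "\<dots> = a \<omega>" using p\<Omega> b(2) by (simp add: compose_def)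
      finally show ?thesis by simp
    qed
    moreover have "m p (j r) = m q (j r)"
      using base_agree[OF D2 Mbase[OF m], of p q "j r"] p\<Omega> q(1) jr unfolding \<Omega>_def p_def by simp
    moreover have "\<omega> (j r) = \<delta>" unfolding \<omega>_def using jr by simp
    ultimately have a\<delta>: "a \<omega> (j r) = \<delta>" using q(2) by simp
    have "b \<omega> (j i) = \<delta>" if i: "i \<in> {1..s} - {r}" for i
    proof -
      have ji: "j i \<in> {1..l}" using j_range i by blast
      have "j i \<noteq> j r" using j_inj i r unfolding inj_on_def by blast
      then have "p (j i) = \<omega> (j i)" unfolding p_def \<omega>_def using ji by simp
      then have "b \<omega> (j i) = b p (j i)"
        using base_agree[OF D2 Mbase[OF b(1)], of \<omega> p "j i"] p\<Omega> \<omega>\<Omega> ji unfolding \<Omega>_def by simp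
      then show ?thesis using b(2) ji unfolding \<omega>_def by simp
    qed
    then show ?thesis using aM b(1) mab a\<delta> by blast
  qed
  have part1: "A r <#>\<^bsub>Sym\<Omega>\<^esub> (T \<inter> (\<Inter>i\<in>{1..s} - {r}. A i)) = T" if r: "r \<in> {1..s}" for r
  proof
    show "A r <#>\<^bsub>Sym\<Omega>\<^esub> (T \<inter> (\<Inter>i\<in>{1..s} - {r}. A i)) \<subseteq> T"
    proof
      fix z assume "z \<in> A r <#>\<^bsub>Sym\<Omega>\<^esub> (T \<inter> (\<Inter>i\<in>{1..s} - {r}. A i))"
      then obtain x y where xy: "x \<in> A r" "y \<in> T" "z = x \<otimes>\<^bsub>Sym\<Omega>\<^esub> y"
        unfolding set_mult_def by blast
      have "x \<in> T" using xy(1) unfolding A_def proj_factor_def by blast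
      then show "z \<in> T" using xy subgroup.m_closed[OF sT] by blast
    qed
  next
    show "T \<subseteq> A r <#>\<^bsub>Sym\<Omega>\<^esub> (T \<inter> (\<Inter>i\<in>{1..s} - {r}. A i))"
    proof
      fix t assume t: "t \<in> T"
      have tM: "t \<in> M" using t TM by blast
      obtain a b where ab: "a \<in> M" "b \<in> M" "t = a \<otimes>\<^bsub>Sym\<Omega>\<^esub> b" "a \<omega> (j r) = \<delta>"
        "\<forall>i\<in>{1..s} - {r}. b \<omega> (j i) = \<delta>" using key[OF tM r] by blast
      obtain t1 u1 where a1: "t1 \<in> T" "u1 \<in> N" "a = t1 \<otimes>\<^bsub>Sym\<Omega>\<^esub> u1" using dec ab(1) by blast
      obtain t2 u2 where b1: "t2 \<in> T" "u2 \<in> N" "b = t2 \<otimes>\<^bsub>Sym\<Omega>\<^esub> u2" using dec ab(2) by blast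
      have G: "t1 \<in> carrier Sym\<Omega>" "t2 \<in> carrier Sym\<Omega>" "u1 \<in> carrier Sym\<Omega>" "u2 \<in> carrier Sym\<Omega>"
        using a1 b1 TS NS by auto
      have tG: "t \<in> carrier Sym\<Omega>" using t TS by blast
      have "t = t1 \<otimes>\<^bsub>Sym\<Omega>\<^esub> (u1 \<otimes>\<^bsub>Sym\<Omega>\<^esub> t2) \<otimes>\<^bsub>Sym\<Omega>\<^esub> u2"
        using ab(3) a1(3) b1(3) G by (simp add: S.m_assoc)
      also have "\<dots> = t1 \<otimes>\<^bsub>Sym\<Omega>\<^esub> (t2 \<otimes>\<^bsub>Sym\<Omega>\<^esub> u1) \<otimes>\<^bsub>Sym\<Omega>\<^esub> u2"
        using comm a1(2) b1(1) by simp
      also have "\<dots> = (t1 \<otimes>\<^bsub>Sym\<Omega>\<^esub> t2) \<otimes>\<^bsub>Sym\<Omega>\<^esub> (u1 \<otimes>\<^bsub>Sym\<Omega>\<^esub> u2)"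
        using G by (simp add: S.m_assoc)
      finally have teq: "t = (t1 \<otimes>\<^bsub>Sym\<Omega>\<^esub> t2) \<otimes>\<^bsub>Sym\<Omega>\<^esub> (u1 \<otimes>\<^bsub>Sym\<Omega>\<^esub> u2)" .
      have t12T: "t1 \<otimes>\<^bsub>Sym\<Omega>\<^esub> t2 \<in> T" using subgroup.m_closed[OF sT a1(1) b1(1)] .
      have u12N: "u1 \<otimes>\<^bsub>Sym\<Omega>\<^esub> u2 \<in> N" using subgroup.m_closed[OF sN a1(2) b1(2)] .
      have t12G: "t1 \<otimes>\<^bsub>Sym\<Omega>\<^esub> t2 \<in> carrier Sym\<Omega>" using t12T TS by blast
      have u12G: "u1 \<otimes>\<^bsub>Sym\<Omega>\<^esub> u2 \<in> carrier Sym\<Omega>" using u12N NS by blast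
      have "u1 \<otimes>\<^bsub>Sym\<Omega>\<^esub> u2 = inv\<^bsub>Sym\<Omega>\<^esub> (t1 \<otimes>\<^bsub>Sym\<Omega>\<^esub> t2) \<otimes>\<^bsub>Sym\<Omega>\<^esub> t"
        using teq t12G u12G by (simp add: S.m_assoc[symmetric])
      moreover have "inv\<^bsub>Sym\<Omega>\<^esub> (t1 \<otimes>\<^bsub>Sym\<Omega>\<^esub> t2) \<otimes>\<^bsub>Sym\<Omega>\<^esub> t \<in> T"
        using subgroup.m_closed[OF sT subgroup.m_inv_closed[OF sT t12T] t] .
      ultimately have "u1 \<otimes>\<^bsub>Sym\<Omega>\<^esub> u2 \<in> T \<inter> N" using u12N by simp
      then have "u1 \<otimes>\<^bsub>Sym\<Omega>\<^esub> u2 = \<one>\<^bsub>Sym\<Omega>\<^esub>" using TN by blast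
      then have tt: "t = t1 \<otimes>\<^bsub>Sym\<Omega>\<^esub> t2" using teq t12G by simp
      have t1A: "t1 \<in> A r"
        unfolding A_def proj_factor_def
        using a1 ab(1) ab(4) Mr[OF ab(1), of r] NTbar unfolding Sym\<Omega>_def by blast
      have t2A: "t2 \<in> A i" if i: "i \<in> {1..s} - {r}" for i
        unfolding A_def proj_factor_def
        using b1 ab(2) ab(5) i Mr[OF ab(2), of i] NTbar unfolding Sym\<Omega>_def by blast
      show "t \<in> A r <#>\<^bsub>Sym\<Omega>\<^esub> (T \<inter> (\<Inter>i\<in>{1..s} - {r}. A i))"
        unfolding set_mult_def using t1A t2A b1(1) tt by blast
    qed
  qed
  have part2: "proj_factor Sym\<Omega> T Tbar {m \<in> M. m \<omega> = \<omega>} \<subseteq> T \<inter> (\<Inter>r\<in>{1..s}. A r)"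
  proof
    fix t assume "t \<in> proj_factor Sym\<Omega> T Tbar {m \<in> M. m \<omega> = \<omega>}"
    then obtain h u where h: "t \<in> T" "h \<in> M" "h \<omega> = \<omega>" "u \<in> Tbar" "h = t \<otimes>\<^bsub>Sym\<Omega>\<^esub> u"
      unfolding proj_factor_def by blast
    have "t \<in> A r" if r: "r \<in> {1..s}" for r
    proof -
      have "j r \<in> {1..l}" using j_range r by blast
      then have "h \<omega> (j r) = \<delta>" using h(3) unfolding \<omega>_def by simp
      then have "h \<in> component_stab_preimage l D M (j r) \<delta>" using Mr[OF h(2)] by simp
      then show ?thesis unfolding A_def proj_factor_def using h unfolding Sym\<Omega>_def by blast
    qed
    then show "t \<in> T \<inter> (\<Inter>r\<in>{1..s}. A r)" using h(1) by blast
  qed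
  show ?thesis using part1 part2 by blast
qed

end
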